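(* Consider the single-input single-output discrete-time closed-loop setting described in the context, and fix a DFT frequency $\omega_\ell = 2\pi\ell/N$ at which $S(e^{j\omega_\ell})R(e^{j\omega_\ell}) \neq 0$. Let $Z_{\mathrm{dir}} := \frac{1}{SR}\big(\bar V_y - G\bar V_u\big)$ and $Z_{\mathrm{io}} := \frac{1}{SR}\big(\bar V_y^{(1)} - G\bar V_u^{(2)}\big)$ be the limits in distribution, as $\sigma\to 0$, of $\sigma^{-1}(\widehat G_{\mathrm{dir}}-G)$ and $\sigma^{-1}(\widehat{\widehat G}_{\mathrm{io}}-G)$ respectively. Let $\bar\sigma_{yu} := \mathbb{E}[\bar V_y \bar V_u^{\ast}]$. If $\Re\big[G^{\ast}(e^{j\omega_\ell})\,\bar\sigma_{yu}\big] < 0$, then \[ \mathbb{E}\big[|Z_{\mathrm{io}}|^2\big] < \mathbb{E}\big[|Z_{\mathrm{dir}}|^2\big], \] i.e., the asymptotic variance (as $\sigma\to0$) of $\widehat{\widehat G}_{\mathrm{io}}$ is strictly smaller than that of $\widehat G_{\mathrm{dir}}$ at $\omega_\ell$.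
   Context: Setting: unit sample time, $\mathrm{q}$ the forward shift operator. Plant $G(\mathrm{q})$ and controller $C(\mathrm{q})$ are linear time-invariant and the closed loop is stable; the sensitivity is $S = 1/(1+GC)$. Noise $v(k) = H(\mathrm{q})e(k)$ with $H$ a stable spectral factor and $e(k)=\sigma\bar e(k)$, where $\bar e$ is a zero-mean unit-variance white process whose distribution does not depend on $\sigma>0$. Reference $r(k)=r_2(k)+C(\mathrm{q})r_1(k)$ with $r_1,r_2$ known, $r$ periodic with period $N$. Plant output and input: $y = S G r + S v$, $u = S r - S C v$. Data $\{(r_k,u_k,y_k)\}_{k=0}^{N-1}$ consist of one period collected in steady state, synchronized with $r$. The DFT of a record $x_0,\dots,x_{N-1}$ is $X(e^{j\omega_\ell}) = N^{-1/2}\sum_{k=0}^{N-1}x_k e^{-j\omega_\ell k}$, $\omega_\ell = 2\pi\ell/N$. At the fixed frequency, $G,S,C,H$ denote the values of the transfer functions at $e^{j\omega_\ell}$, and $R,U,Y$ the DFTs of $r,u,y$. The noise contributions $V_y, V_u$ are defined by $Y = SGR + V_y$, $U = SR + V_u$; they are proportional to $\sigma$, and $\bar V_y := V_y/\sigma$, $\bar V_u := V_u/\sigma$ are zero-mean complex random variables with finite variances whose distributions do not depend on $\sigma$. Direct estimator: $\widehat G_{\mathrm{dir}} := Y/U$. Two-experiment joint input-output estimator: a second, independent experiment with the same excitation $r$ (same deterministic parts, independent noise) is performed; $Y^{(1)}$ is the output DFT from experiment 1 and $U^{(2)}$ the input DFT from experiment 2, with normalized noise contributions $\bar V_y^{(1)}$,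 $\bar V_u^{(2)}$ (independent of each other, distributed as $\bar V_y$, $\bar V_u$ respectively); $\widehat{\widehat G}_{\mathrm{io}} := \dfrac{Y^{(1)}/R}{U^{(2)}/R}$. The asymptotic variance of an estimator is $\mathbb{E}|Z|^2$ of its limiting distribution $Z$ of $\sigma^{-1}(\widehat G - G)$ as $\sigma\to0$. *)

theory Defs
  imports "HOL-Probability.Probability"
begin

text \<open>Asymptotic variance of an estimator whose normalized error
  converges in distribution to the complex random variable Z on M:
  the second moment E|Z|^2.\<close>
definition asym_var :: "'a measure \<Rightarrow> ('a \<Rightarrow> complex) \<Rightarrow> real" where
  "asym_var M Z = (\<integral>x. (cmod (Z x))^2 \<partial>M)"

end

theory Submission
  imports Defs
begin

lemma cnj_meas[measurable]: "(\<lambda>z::complex. cnj z) \<in> borel_measurable borel"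
  by (intro borel_measurable_continuous_onI continuous_intros)

lemma lin_int:
  fixes f g h :: "'a \<Rightarrow> real"
  assumes "integrable M f" "integrable M g" "integrable M h"
  shows "(\<integral>x. f x + c * g x - 2 * h x \<partial>M) = integral\<^sup>L M f + c * integral\<^sup>L M g - 2 * integral\<^sup>L M h"
  using assms by simp

lemma sq_int_imp_int:
  fixes a :: "'a \<Rightarrow> complex"
  assumes "prob_space M" "a \<in> borel_measurable M" "integrable M (\<lambda>x. (cmod (a x))^2)"
  shows "integrable M a"
proof -
  interpret prob_space M by fact
  have "integrable M (\<lambda>x. 1 + (cmod (a x))^2)" using assms by auto
  moreover have "norm (a x) \<le> norm (1 + (cmod (a x))^2)" for x
  proof -
    have "0 \<le> (cmod (a x) - 1/2)^2" by simp
    hence "cmod (a x) \<le> 1 + (cmod (a x))^2" by (simp add: power2_eq_square algebra_simps)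
    thus ?thesis by simp
  qed
  ultimately show ?thesis using assms(2)
    by (rule_tac Bochner_Integration.integrable_bound) auto
qed

lemma expand:
  fixes a b :: "'a \<Rightarrow> complex" and G :: complex
  assumes "a \<in> borel_measurable M" "b \<in> borel_measurable M"
    "integrable M (\<lambda>x. (cmod (a x))^2)" "integrable M (\<lambda>x. (cmod (b x))^2)"
  shows "integrable M (\<lambda>x. a x * cnj (b x))"
    and "(\<integral>x. (cmod (a x - G * b x))^2 \<partial>M) = (\<integral>x. (cmod (a x))^2 \<partial>M)
        + (cmod G)^2 * (\<integral>x. (cmod (b x))^2 \<partial>M) - 2 * Re (cnj G * (\<integral>x. a x * cnj (b x) \<partial>M))"
proof -
  have "integrable M (\<lambda>x. (cmod (a x))^2 + (cmod (b x))^2)" using assms by auto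
  moreover have "norm (a x * cnj (b x)) \<le> norm ((cmod (a x))^2 + (cmod (b x))^2)" for x
  proof -
    have "norm (a x * cnj (b x)) = cmod (a x) * cmod (b x)" by (simp add: norm_mult)
    also have "\<dots> \<le> (cmod (a x))^2 + (cmod (b x))^2"
      using sum_squares_bound[of "cmod (a x)" "cmod (b x)"]
        mult_nonneg_nonneg[OF norm_ge_zero[of "a x"] norm_ge_zero[of "b x"]] by linarith
    finally show ?thesis by simp
  qed
  moreover have "(\<lambda>x. a x * cnj (b x)) \<in> borel_measurable M" using assms(1,2) by measurable
  ultimately show I: "integrable M (\<lambda>x. a x * cnj (b x))"
    by (rule_tac Bochner_Integration.integrable_bound) auto
  have pt: "(cmod (a x - G * b x))^2 = (cmod (a x))^2 + (cmod G)^2 * (cmod (b x))^2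
        - 2 * Re (cnj G * (a x * cnj (b x)))" for x
    by (simp only: cmod_power2) (simp add: power2_eq_square algebra_simps)
  have I2: "integrable M (\<lambda>x. Re (cnj G * (a x * cnj (b x))))"
    by (rule integrable_Re, rule integrable_mult_right, rule I)
  have "(\<integral>x. (cmod (a x - G * b x))^2 \<partial>M) = (\<integral>x. (cmod (a x))^2 + (cmod G)^2 * (cmod (b x))^2
        - 2 * Re (cnj G * (a x * cnj (b x))) \<partial>M)" by (simp add: pt)
  also have "\<dots> = (\<integral>x. (cmod (a x))^2 \<partial>M)
        + (cmod G)^2 * (\<integral>x. (cmod (b x))^2 \<partial>M) - 2 * (\<integral>x. Re (cnj G * (a x * cnj (b x))) \<partial>M)"
    by (rule lin_int[OF assms(3) assms(4) I2])
  also have "(\<integral>x. Re (cnj G * (a x * cnj (b x))) \<partial>M) = Re (cnj G * (\<integral>x. a x * cnj (b x) \<partial>M))"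
    using integral_Re[OF integrable_mult_right[OF I, of "cnj G"]]
    by (simp only: integral_mult_right_zero)
  finally show "(\<integral>x. (cmod (a x - G * b x))^2 \<partial>M) = (\<integral>x. (cmod (a x))^2 \<partial>M)
        + (cmod G)^2 * (\<integral>x. (cmod (b x))^2 \<partial>M) - 2 * Re (cnj G * (\<integral>x. a x * cnj (b x) \<partial>M))" .
qed

theorem theorem1:
  fixes M :: "'a measure"
    and Vy Vu Vy1 Vu2 :: "'a \<Rightarrow> complex"
    and G S R :: complex
  assumes prob: "prob_space M"
    and meas: "Vy \<in> borel_measurable M" "Vu \<in> borel_measurable M"
              "Vy1 \<in> borel_measurable M" "Vu2 \<in> borel_measurable M"
    and fin_var: "integrable M (\<lambda>x. (cmod (Vy x))^2)" "integrable M (\<lambda>x. (cmod (Vu x))^2)"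
    and zero_mean: "(\<integral>x. Vy x \<partial>M) = 0" "(\<integral>x. Vu x \<partial>M) = 0"
    and distr_y1: "distr M borel Vy1 = distr M borel Vy"
    and distr_u2: "distr M borel Vu2 = distr M borel Vu"
    and indep: "prob_space.indep_var M borel Vy1 borel Vu2"
    and SR_nz: "S * R \<noteq> 0"
    and neg: "Re (cnj G * (\<integral>x. Vy x * cnj (Vu x) \<partial>M)) < 0"
  shows "asym_var M (\<lambda>x. (Vy1 x - G * Vu2 x) / (S * R))
       < asym_var M (\<lambda>x. (Vy x - G * Vu x) / (S * R))"
proof -
  interpret prob_space M by fact
  have tr: "\<And>X Y. X \<in> borel_measurable M \<Longrightarrow> Y \<in> borel_measurable M \<Longrightarrow>
      distr M borel X = distr M borel Y \<Longrightarrow> f \<in> borel_measurable borel \<Longrightarrow>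
      (\<integral>x. f (X x) \<partial>M) = (\<integral>x. f (Y x) \<partial>M) \<and> (integrable M (\<lambda>x. f (X x)) = integrable M (\<lambda>x. f (Y x)))"
    for f :: "complex \<Rightarrow> 'b::{banach, second_countable_topology}"
    by (metis integral_distr integrable_distr_eq measurable_distr_eq1)
  note y1 = tr[OF meas(3) meas(1) distr_y1] and u2 = tr[OF meas(4) meas(2) distr_u2]
  have sqm: "(\<lambda>z::complex. (cmod z)^2) \<in> borel_measurable borel" by measurable
  have idm: "(\<lambda>z::complex. z) \<in> borel_measurable borel" by measurable
  have cm: "(\<lambda>z::complex. cnj z) \<in> borel_measurable borel" by (intro borel_measurable_continuous_onI continuous_intros)
  have fy1: "integrable M (\<lambda>x. (cmod (Vy1 x))^2)" "(\<integral>x. (cmod (Vy1 x))^2 \<partial>M) = (\<integral>x. (cmod (Vy x))^2 \<partial>M)"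
    using y1[OF sqm] fin_var by auto
  have fu2: "integrable M (\<lambda>x. (cmod (Vu2 x))^2)" "(\<integral>x. (cmod (Vu2 x))^2 \<partial>M) = (\<integral>x. (cmod (Vu x))^2 \<partial>M)"
    using u2[OF sqm] fin_var by auto
  have iy1: "integrable M Vy1" by (rule sq_int_imp_int[OF prob meas(3) fy1(1)])
  have iu2: "integrable M Vu2" by (rule sq_int_imp_int[OF prob meas(4) fu2(1)])
  have my1: "(\<integral>x. Vy1 x \<partial>M) = 0" using y1[OF idm] zero_mean by simp
  have mu2: "(\<integral>x. Vu2 x \<partial>M) = 0" using u2[OF idm] zero_mean by simp
  have ind2: "indep_var borel Vy1 borel (cnj \<circ> Vu2)"
    using indep_var_compose[OF indep, of "\<lambda>z. z" borel cnj borel] cm by (simp add: comp_def o_def)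
  have cross: "(\<integral>x. Vy1 x * cnj (Vu2 x) \<partial>M) = 0"
    using indep_var_lebesgue_integral[OF ind2 iy1] iu2 my1 by (simp add: o_def)
  have k: "0 < (cmod (S * R))^2" using SR_nz by simp
  have dv: "\<And>f. asym_var M (\<lambda>x. f x / (S * R)) = (\<integral>x. (cmod (f x))^2 \<partial>M) / (cmod (S * R))^2"
    by (simp add: asym_var_def norm_divide power_divide)
  show ?thesis
    unfolding dv
    using expand(2)[OF meas(3,4) fy1(1) fu2(1), of G] expand(2)[OF meas(1,2) fin_var, of G]
      fy1(2) fu2(2) cross neg k
    by (simp add: divide_strict_right_mono)
qed

end
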